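(* Assume (A-J) and let $f\in C^{0,1}_{\mathrm{loc}}(\mathbb{R})$. Let $t_0<t_1$ and let $u_1,u_2$ be bounded measurable functions on $[t_0,t_1]\times\Omega$ such that, for $i\in\{1,2\}$: $u_i(t,\cdot),\partial_tu_i(t,\cdot)\in C(\Omega)$ for all $t\in(t_0,t_1]$ and $u_i(t_0,\cdot)\in C(\Omega)$; $u_i(\cdot,x)\in C([t_0,t_1])\cap C^1((t_0,t_1])$ for all $x\in\Omega$; and $\sup_{(t,x)\in(t_0,t_1]\times\Omega}|\partial_tu_i(t,x)|<\infty$. Suppose $$\partial_tu_1-Lu_1-f(u_1)\ge\partial_tu_2-Lu_2-f(u_2)\ \text{in }(t_0,t_1]\times\Omega,\qquad u_1(t_0,\cdot)\ge u_2(t_0,\cdot)\ \text{in }\Omega.$$ Then $u_1(t,x)\ge u_2(t,x)$ for all $(t,x)\in[t_0,t_1]\times\Omega$.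
   Context: $K\subset\mathbb{R}^N$ is compact and $\Omega:=\mathbb{R}^N\setminus K$ is connected. A distance $\delta$ on $E\subset\mathbb{R}^N$ is quasi-Euclidean if $\delta(x,y)=|x-y|$ whenever $[x,y]\subset E$ and $\delta(x,y)\ge|x-y|$ for all $x,y\in E$; $\delta$ is a quasi-Euclidean distance on $\overline\Omega$. For measurable $J:[0,\infty)\to[0,\infty)$ with $|\mathrm{supp}(J)|>0$ and $x\in\overline\Omega$, $\Pi_0(J,x)=\{x\}$, $\Pi_{j+1}(J,x)=\bigcup_{z\in\Pi_j(J,x)}\mathrm{supp}(J(\delta(\cdot,z)))$; $(\Omega,\delta)$ has the $J$-covering property if $\overline\Omega=\bigcup_j\Pi_j(J,x)$ for all $x\in\overline\Omega$. Notation: $J_{\mathrm{rad}}(z)=J(|z|)$, $\mathcal{J}^\delta(x)=\int_\Omega J(\delta(x,z))dz$, $Lu(x)=\int_\Omega J(\delta(x,y))(u(y)-u(x))dy$. (A-J): $J:[0,\infty)\to[0,\infty)$ measurable, compactly supported, $|\mathrm{supp}J|>0$; $(\Omega,\delta)$ has the $J$-covering property; $\int_{\mathbb{R}^N}J_{\mathrm{rad}}=1$; for every $y\in\overline\Omega$, $\|J(\delta(y,\cdot))-J(\delta(z,\cdot))\|_{L^1(\Omega)}\to0$ as $z\to y$; $\mathcal{J}^\delta\in L^\infty(\Omega)$. *)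

theory Defs
  imports "HOL-Analysis.Analysis"
begin

definition is_distance_on :: "'a set \<Rightarrow> ('a \<Rightarrow> 'a \<Rightarrow> real) \<Rightarrow> bool" where
  "is_distance_on E d \<longleftrightarrow>
     (\<forall>x\<in>E. \<forall>y\<in>E. 0 \<le> d x y \<and> (d x y = 0 \<longleftrightarrow> x = y) \<and> d x y = d y x) \<and>
     (\<forall>x\<in>E. \<forall>y\<in>E. \<forall>z\<in>E. d x z \<le> d x y + d y z)"

definition quasi_euclidean :: "('a::euclidean_space) set \<Rightarrow> ('a \<Rightarrow> 'a \<Rightarrow> real) \<Rightarrow> bool" where
  "quasi_euclidean E d \<longleftrightarrow> is_distance_on E d \<and>
     (\<forall>x\<in>E. \<forall>y\<in>E. closed_segment x y \<subseteq> E \<longrightarrow> d x y = dist x y) \<and>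
     (\<forall>x\<in>E. \<forall>y\<in>E. d x y \<ge> dist x y)"

definition supp_kernel :: "(real \<Rightarrow> real) \<Rightarrow> real set" where
  "supp_kernel J = closure {r. 0 \<le> r \<and> J r \<noteq> 0}"

definition supp_at :: "(real \<Rightarrow> real) \<Rightarrow> ('a::euclidean_space \<Rightarrow> 'a \<Rightarrow> real) \<Rightarrow> 'a set \<Rightarrow> 'a \<Rightarrow> 'a set" where
  "supp_at J d \<Omega> z = closure {y \<in> closure \<Omega>. J (d y z) \<noteq> 0}"

primrec Pi_set :: "(real \<Rightarrow> real) \<Rightarrow> ('a::euclidean_space \<Rightarrow> 'a \<Rightarrow> real) \<Rightarrow> 'a set \<Rightarrow> 'a \<Rightarrow> nat \<Rightarrow> 'a set" where
  "Pi_set J d \<Omega> x 0 = {x}"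
| "Pi_set J d \<Omega> x (Suc j) = (\<Union>z\<in>Pi_set J d \<Omega> x j. supp_at J d \<Omega> z)"

definition J_covering :: "(real \<Rightarrow> real) \<Rightarrow> ('a::euclidean_space \<Rightarrow> 'a \<Rightarrow> real) \<Rightarrow> 'a set \<Rightarrow> bool" where
  "J_covering J d \<Omega> \<longleftrightarrow> (\<forall>x\<in>closure \<Omega>. closure \<Omega> = (\<Union>j. Pi_set J d \<Omega> x j))"

definition assm_AJ :: "(real \<Rightarrow> real) \<Rightarrow> ('a::euclidean_space \<Rightarrow> 'a \<Rightarrow> real) \<Rightarrow> 'a set \<Rightarrow> bool" where
  "assm_AJ J d \<Omega> \<longleftrightarrow>
     J \<in> borel_measurable borel \<and>
     (\<forall>r\<ge>0. 0 \<le> J r) \<and>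
     compact (supp_kernel J) \<and>
     emeasure lborel (supp_kernel J) > 0 \<and>
     J_covering J d \<Omega> \<and>
     integrable lborel (\<lambda>z::'a. J (norm z)) \<and> integral\<^sup>L lborel (\<lambda>z::'a. J (norm z)) = 1 \<and>
     (\<forall>y\<in>closure \<Omega>. (\<lambda>w. J (d y w)) \<in> borel_measurable (restrict_space lebesgue \<Omega>)) \<and>
     (\<forall>y\<in>closure \<Omega>. ((\<lambda>z. \<integral>\<^sup>+ w\<in>\<Omega>. ennreal \<bar>J (d y w) - J (d z w)\<bar> \<partial>lebesgue) \<longlongrightarrow> 0)
                          (at y within closure \<Omega>)) \<and>
     (\<exists>C. AE x in lebesgue. x \<in> \<Omega> \<longrightarrow> (\<integral>\<^sup>+ z\<in>\<Omega>. ennreal (J (d x z)) \<partial>lebesgue) \<le> ennreal C)"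

definition Lop :: "(real \<Rightarrow> real) \<Rightarrow> ('a::euclidean_space \<Rightarrow> 'a \<Rightarrow> real) \<Rightarrow> 'a set \<Rightarrow> ('a \<Rightarrow> real) \<Rightarrow> 'a \<Rightarrow> real" where
  "Lop J d \<Omega> w x = (\<integral>y\<in>\<Omega>. J (d x y) * (w y - w x) \<partial>lebesgue)"

end

theory Submission
  imports Defs
begin
lemma J_bound:
  fixes \<Omega> :: "'a::euclidean_space set" and \<delta> :: "'a \<Rightarrow> 'a \<Rightarrow> real"
  assumes qe: "quasi_euclidean (closure \<Omega>) \<delta>" and AJ: "assm_AJ J \<delta> \<Omega>" and op: "open \<Omega>"
  shows "\<exists>C\<ge>0. \<forall>x\<in>\<Omega>. integrable (restrict_space lebesgue \<Omega>) (\<lambda>w. J (\<delta> x w))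
      \<and> integral\<^sup>L (restrict_space lebesgue \<Omega>) (\<lambda>w. J (\<delta> x w)) \<le> C"
proof -
  have Jnn: "\<And>r. r \<ge> 0 \<Longrightarrow> 0 \<le> J r" using AJ unfolding assm_AJ_def by auto
  have dnn: "\<And>x y. x \<in> \<Omega> \<Longrightarrow> y \<in> \<Omega> \<Longrightarrow> 0 \<le> \<delta> x y"
    using qe closure_subset unfolding quasi_euclidean_def is_distance_on_def by blast
  have gnn: "\<And>x y. x \<in> \<Omega> \<Longrightarrow> y \<in> \<Omega> \<Longrightarrow> 0 \<le> J (\<delta> x y)" using Jnn dnn by blast
  have Os: "\<Omega> \<in> sets lebesgue" using op by simp
  have meas: "\<And>y. y \<in> \<Omega> \<Longrightarrow> (\<lambda>w. J (\<delta> y w)) \<in> borel_measurable (restrict_space lebesgue \<Omega>)"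
    using AJ closure_subset unfolding assm_AJ_def by blast
  have measE: "\<And>y. y \<in> \<Omega> \<Longrightarrow> (\<lambda>w. ennreal (J (\<delta> y w)) * indicator \<Omega> w) \<in> borel_measurable lebesgue"
  proof -
    fix y assume "y \<in> \<Omega>"
    then have "(\<lambda>w. ennreal (J (\<delta> y w))) \<in> borel_measurable (restrict_space lebesgue \<Omega>)"
      using meas by measurable
    then show "?thesis y" using borel_measurable_restrict_space_iff_ennreal[of \<Omega> lebesgue] Os by simp
  qed
  have measD: "\<And>y z. y \<in> \<Omega> \<Longrightarrow> z \<in> \<Omega> \<Longrightarrow> (\<lambda>w. ennreal \<bar>J (\<delta> y w) - J (\<delta> z w)\<bar> * indicator \<Omega> w) \<in> borel_measurable lebesgue"
  proof -
    fix y z assume "y \<in> \<Omega>" "z \<in> \<Omega>"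
    then have h: "(\<lambda>w. ennreal \<bar>J (\<delta> y w) - J (\<delta> z w)\<bar>) \<in> borel_measurable (restrict_space lebesgue \<Omega>)"
      using meas by measurable
    have sp: "\<Omega> \<inter> space lebesgue \<in> sets lebesgue" using Os by simp
    show "?thesis y z" using borel_measurable_restrict_space_iff_ennreal[OF sp, THEN iffD1, OF h] .
  qed
  have lim: "\<And>y. y \<in> \<Omega> \<Longrightarrow> ((\<lambda>z. \<integral>\<^sup>+ w\<in>\<Omega>. ennreal \<bar>J (\<delta> y w) - J (\<delta> z w)\<bar> \<partial>lebesgue) \<longlongrightarrow> 0) (at y within closure \<Omega>)"
    using AJ closure_subset unfolding assm_AJ_def by blast
  obtain C where C: "AE x in lebesgue. x \<in> \<Omega> \<longrightarrow> (\<integral>\<^sup>+ z\<in>\<Omega>. ennreal (J (\<delta> x z)) \<partial>lebesgue) \<le> ennreal C"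
    using AJ unfolding assm_AJ_def by blast
  have bound: "(\<integral>\<^sup>+ w\<in>\<Omega>. ennreal (J (\<delta> x w)) \<partial>lebesgue) \<le> ennreal C" if x: "x \<in> \<Omega>" for x
  proof (rule ennreal_le_epsilon)
    fix e :: real assume e: "0 < e"
    have "\<forall>\<^sub>F z in at x within closure \<Omega>. (\<integral>\<^sup>+ w\<in>\<Omega>. ennreal \<bar>J (\<delta> x w) - J (\<delta> z w)\<bar> \<partial>lebesgue) < ennreal e"
      using order_tendstoD(2)[OF lim[OF x], of "ennreal e"] e by simp
    then obtain d where d: "d > 0" and dP: "\<And>z. z \<in> closure \<Omega> \<Longrightarrow> z \<noteq> x \<Longrightarrow> dist z x < d \<Longrightarrow>
        (\<integral>\<^sup>+ w\<in>\<Omega>. ennreal \<bar>J (\<delta> x w) - J (\<delta> z w)\<bar> \<partial>lebesgue) < ennreal e"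
      unfolding eventually_at by blast
    obtain r where r: "r > 0" "ball x r \<subseteq> \<Omega>" using op x open_contains_ball by blast
    define S where "S = ball x (min r d) - {x}"
    have Sop: "open S" unfolding S_def by auto
    obtain b :: 'a where b: "b \<in> Basis" using nonempty_Basis by blast
    have "x + (min r d / 2) *\<^sub>R b \<in> S" using b r d unfolding S_def
      by (auto simp: dist_norm)
    then have "\<exists>z\<in>S. z \<in> \<Omega> \<longrightarrow> (\<integral>\<^sup>+ w\<in>\<Omega>. ennreal (J (\<delta> z w)) \<partial>lebesgue) \<le> ennreal C"
    proof -
      assume zS: "x + (min r d / 2) *\<^sub>R b \<in> S"
      show ?thesis
      proof (rule ccontr)
        assume nz: "\<not> ?thesis"
        have "AE z \<in> S in lebesgue. z \<in> {}"
          using C by eventually_elim (use nz in auto)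
        then show False using mem_closed_if_AE_lebesgue_open[OF Sop closed_empty _ zS] by blast
      qed
    qed
    then obtain z where zS: "z \<in> S" and zC: "z \<in> \<Omega> \<longrightarrow> (\<integral>\<^sup>+ w\<in>\<Omega>. ennreal (J (\<delta> z w)) \<partial>lebesgue) \<le> ennreal C" by blast
    have zO: "z \<in> \<Omega>" using zS r unfolding S_def by auto
    have zd: "(\<integral>\<^sup>+ w\<in>\<Omega>. ennreal \<bar>J (\<delta> x w) - J (\<delta> z w)\<bar> \<partial>lebesgue) < ennreal e"
      using dP[of z] zS zO closure_subset unfolding S_def by (auto simp: dist_commute)
    have "(\<integral>\<^sup>+ w\<in>\<Omega>. ennreal (J (\<delta> x w)) \<partial>lebesgue)
       \<le> (\<integral>\<^sup>+ w. (ennreal (J (\<delta> z w)) * indicator \<Omega> w + ennreal \<bar>J (\<delta> x w) - J (\<delta> z w)\<bar> * indicator \<Omega> w) \<partial>lebesgue)"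
    proof (rule nn_integral_mono)
      fix w
      show "ennreal (J (\<delta> x w)) * indicator \<Omega> w \<le> ennreal (J (\<delta> z w)) * indicator \<Omega> w + ennreal \<bar>J (\<delta> x w) - J (\<delta> z w)\<bar> * indicator \<Omega> w"
      proof (cases "w \<in> \<Omega>")
        case True
        then have "0 \<le> J (\<delta> z w)" using gnn zO by blast
        then have "ennreal (J (\<delta> x w)) \<le> ennreal (J (\<delta> z w) + \<bar>J (\<delta> x w) - J (\<delta> z w)\<bar>)"
          by (intro ennreal_leI) auto
        also have "\<dots> = ennreal (J (\<delta> z w)) + ennreal \<bar>J (\<delta> x w) - J (\<delta> z w)\<bar>"
          using \<open>0 \<le> J (\<delta> z w)\<close> by (simp add: ennreal_plus)
        finally show ?thesis using True by simp
      qed simp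
    qed
    also have "\<dots> = (\<integral>\<^sup>+ w\<in>\<Omega>. ennreal (J (\<delta> z w)) \<partial>lebesgue) + (\<integral>\<^sup>+ w\<in>\<Omega>. ennreal \<bar>J (\<delta> x w) - J (\<delta> z w)\<bar> \<partial>lebesgue)"
      by (rule nn_integral_add[OF measE[OF zO] measD[OF x zO]])
    also have "\<dots> \<le> ennreal C + ennreal e"
      using zC zO zd by (intro add_mono) auto
    finally show "(\<integral>\<^sup>+ w\<in>\<Omega>. ennreal (J (\<delta> x w)) \<partial>lebesgue) \<le> ennreal C + ennreal e" .
  qed
  show ?thesis
  proof (intro exI[of _ "max C 0"] conjI ballI)
    show "0 \<le> max C 0" by simp
    fix x assume x: "x \<in> \<Omega>"
    have eq: "(\<integral>\<^sup>+ w. ennreal (J (\<delta> x w)) \<partial>restrict_space lebesgue \<Omega>) = (\<integral>\<^sup>+ w\<in>\<Omega>. ennreal (J (\<delta> x w)) \<partial>lebesgue)"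
      using Os by (simp add: nn_integral_restrict_space)
    have nnR: "AE w in restrict_space lebesgue \<Omega>. 0 \<le> J (\<delta> x w)"
      using gnn x Os by (auto simp: space_restrict_space intro!: AE_I2)
    have int: "integrable (restrict_space lebesgue \<Omega>) (\<lambda>w. J (\<delta> x w))"
      using bound[OF x] eq meas[OF x] nnR
      by (intro integrableI_nonneg) (auto simp: top_unique intro: le_less_trans)
    show "integrable (restrict_space lebesgue \<Omega>) (\<lambda>w. J (\<delta> x w))" by (rule int)
    have E: "ennreal (integral\<^sup>L (restrict_space lebesgue \<Omega>) (\<lambda>w. J (\<delta> x w))) \<le> ennreal C"
      using nn_integral_eq_integral[OF int nnR] eq bound[OF x] by simp
    have "ennreal (max C 0) = ennreal C" by (cases "C \<ge> 0") (auto simp: ennreal_neg max_def)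
    then show "integral\<^sup>L (restrict_space lebesgue \<Omega>) (\<lambda>w. J (\<delta> x w)) \<le> max C 0"
      using E ennreal_le_iff[of "max C 0"] by simp
  qed
qed
lemma cont_meas:
  fixes \<Omega> :: "'a::euclidean_space set" and w :: "'a \<Rightarrow> real"
  assumes op: "open \<Omega>" and c: "continuous_on \<Omega> w"
  shows "w \<in> borel_measurable (restrict_space lebesgue \<Omega>)"
proof -
  have "(\<lambda>y. indicator \<Omega> y *\<^sub>R w y) \<in> borel_measurable borel"
    using borel_measurable_continuous_on_indicator[OF _ c] op by simp
  then have "(\<lambda>y. indicator \<Omega> y *\<^sub>R w y) \<in> borel_measurable lebesgue"
    by (simp add: measurable_completion measurable_lborel1)
  moreover have sp: "\<Omega> \<inter> space lebesgue \<in> sets lebesgue" using op by simp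
  ultimately show ?thesis using borel_measurable_restrict_space_iff[OF sp] by blast
qed

lemma Lop_eq:
  fixes \<Omega> :: "'a::euclidean_space set"
  assumes op: "open \<Omega>"
  shows "Lop J \<delta> \<Omega> w x = integral\<^sup>L (restrict_space lebesgue \<Omega>) (\<lambda>y. J (\<delta> x y) * (w y - w x))"
proof -
  have sp: "\<Omega> \<inter> space lebesgue \<in> sets lebesgue" using op by simp
  show ?thesis unfolding Lop_def set_lebesgue_integral_def integral_restrict_space[OF sp] ..
qed

lemma Lop_diff:
  fixes \<Omega> :: "'a::euclidean_space set" and w1 w2 :: "'a \<Rightarrow> real"
  assumes op: "open \<Omega>" and x: "x \<in> \<Omega>"
    and gi: "integrable (restrict_space lebesgue \<Omega>) (\<lambda>y. J (\<delta> x y))"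
    and gnn: "\<forall>y\<in>\<Omega>. 0 \<le> J (\<delta> x y)"
    and gC: "integral\<^sup>L (restrict_space lebesgue \<Omega>) (\<lambda>y. J (\<delta> x y)) \<le> C"
    and c1: "continuous_on \<Omega> w1" and c2: "continuous_on \<Omega> w2"
    and b1: "\<forall>y\<in>\<Omega>. \<bar>w1 y\<bar> \<le> B" and b2: "\<forall>y\<in>\<Omega>. \<bar>w2 y\<bar> \<le> B"
    and m: "\<forall>y\<in>\<Omega>. w2 y - w1 y \<le> m" and m0: "0 \<le> m" and px: "0 \<le> w2 x - w1 x"
  shows "Lop J \<delta> \<Omega> w2 x - Lop J \<delta> \<Omega> w1 x \<le> m * C"
proof -
  let ?N = "restrict_space lebesgue \<Omega>"
  have spN: "space ?N = \<Omega>" by (simp add: space_restrict_space)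
  have gm: "(\<lambda>y. J (\<delta> x y)) \<in> borel_measurable ?N" using gi by auto
  have w1m: "w1 \<in> borel_measurable ?N" using cont_meas[OF op c1] .
  have w2m: "w2 \<in> borel_measurable ?N" using cont_meas[OF op c2] .
  have int: "integrable ?N (\<lambda>y. J (\<delta> x y) * (w y - w x))"
    if wm: "w \<in> borel_measurable ?N" and wb: "\<forall>y\<in>\<Omega>. \<bar>w y\<bar> \<le> B" for w
  proof (rule Bochner_Integration.integrable_bound[of ?N "\<lambda>y. J (\<delta> x y) * (2 * B)" "\<lambda>y. J (\<delta> x y) * (w y - w x)"])
    show "integrable ?N (\<lambda>y. J (\<delta> x y) * (2 * B))" using gi by simp
    show "(\<lambda>y. J (\<delta> x y) * (w y - w x)) \<in> borel_measurable ?N" using gm wm by measurable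
    show "AE y in ?N. norm (J (\<delta> x y) * (w y - w x)) \<le> norm (J (\<delta> x y) * (2 * B))"
    proof (rule AE_I2)
      fix y assume "y \<in> space ?N"
      then have y: "y \<in> \<Omega>" using spN by simp
      have "\<bar>w y - w x\<bar> \<le> 2 * B" using wb y x by (smt (verit))
      moreover have "\<bar>w y - w x\<bar> \<le> \<bar>2 * B\<bar>" using calculation by simp
      then show "norm (J (\<delta> x y) * (w y - w x)) \<le> norm (J (\<delta> x y) * (2 * B))"
        by (simp add: abs_mult mult_left_mono)
    qed
  qed
  have "Lop J \<delta> \<Omega> w2 x - Lop J \<delta> \<Omega> w1 x
      = integral\<^sup>L ?N (\<lambda>y. J (\<delta> x y) * (w2 y - w2 x) - J (\<delta> x y) * (w1 y - w1 x))"
    unfolding Lop_eq[OF op] using int[OF w1m b1] int[OF w2m b2] by simp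
  also have "\<dots> \<le> integral\<^sup>L ?N (\<lambda>y. m * J (\<delta> x y))"
  proof (rule integral_mono)
    show "integrable ?N (\<lambda>y. J (\<delta> x y) * (w2 y - w2 x) - J (\<delta> x y) * (w1 y - w1 x))"
      using int[OF w1m b1] int[OF w2m b2] by simp
    show "integrable ?N (\<lambda>y. m * J (\<delta> x y))" using gi by simp
    fix y assume "y \<in> space ?N"
    then have y: "y \<in> \<Omega>" using spN by simp
    have "J (\<delta> x y) * (w2 y - w2 x) - J (\<delta> x y) * (w1 y - w1 x) = J (\<delta> x y) * ((w2 y - w1 y) - (w2 x - w1 x))"
      by (simp add: algebra_simps)
    also have "\<dots> \<le> J (\<delta> x y) * m"
      using gnn y m px by (intro mult_left_mono) auto
    finally show "J (\<delta> x y) * (w2 y - w2 x) - J (\<delta> x y) * (w1 y - w1 x) \<le> m * J (\<delta> x y)"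
      by (simp add: mult.commute)
  qed
  also have "\<dots> = m * integral\<^sup>L ?N (\<lambda>y. J (\<delta> x y))" by simp
  also have "\<dots> \<le> m * C" using gC m0 by (rule mult_left_mono)
  finally show ?thesis .
qed
theorem lemma3p1:
  fixes K :: "'a::euclidean_space set" and \<Omega> :: "'a set"
    and \<delta> :: "'a \<Rightarrow> 'a \<Rightarrow> real" and J :: "real \<Rightarrow> real" and f :: "real \<Rightarrow> real"
    and t0 t1 :: real and u1 u2 v1 v2 :: "real \<Rightarrow> 'a \<Rightarrow> real"
  assumes K: "compact K" and \<Omega>_def: "\<Omega> = UNIV - K" and conn: "connected \<Omega>"
    and qe: "quasi_euclidean (closure \<Omega>) \<delta>"
    and AJ: "assm_AJ J \<delta> \<Omega>"
    and f_lip: "\<forall>S. compact S \<longrightarrow> (\<exists>C. C-lipschitz_on S f)"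
    and t01: "t0 < t1"
    and meas1: "(\<lambda>p. u1 (fst p) (snd p)) \<in> borel_measurable (restrict_space (lborel \<Otimes>\<^sub>M lborel) ({t0..t1} \<times> \<Omega>))"
    and meas2: "(\<lambda>p. u2 (fst p) (snd p)) \<in> borel_measurable (restrict_space (lborel \<Otimes>\<^sub>M lborel) ({t0..t1} \<times> \<Omega>))"
    and bdd1: "\<exists>M. \<forall>t\<in>{t0..t1}. \<forall>x\<in>\<Omega>. \<bar>u1 t x\<bar> \<le> M"
    and bdd2: "\<exists>M. \<forall>t\<in>{t0..t1}. \<forall>x\<in>\<Omega>. \<bar>u2 t x\<bar> \<le> M"
    and cx1: "\<forall>t\<in>{t0<..t1}. continuous_on \<Omega> (u1 t) \<and> continuous_on \<Omega> (v1 t)"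
    and cx2: "\<forall>t\<in>{t0<..t1}. continuous_on \<Omega> (u2 t) \<and> continuous_on \<Omega> (v2 t)"
    and c01: "continuous_on \<Omega> (u1 t0)" and c02: "continuous_on \<Omega> (u2 t0)"
    and ct1: "\<forall>x\<in>\<Omega>. continuous_on {t0..t1} (\<lambda>t. u1 t x) \<and> continuous_on {t0<..t1} (\<lambda>t. v1 t x)
               \<and> (\<forall>t\<in>{t0<..t1}. ((\<lambda>s. u1 s x) has_real_derivative v1 t x) (at t within {t0<..t1}))"
    and ct2: "\<forall>x\<in>\<Omega>. continuous_on {t0..t1} (\<lambda>t. u2 t x) \<and> continuous_on {t0<..t1} (\<lambda>t. v2 t x)
               \<and> (\<forall>t\<in>{t0<..t1}. ((\<lambda>s. u2 s x) has_real_derivative v2 t x) (at t within {t0<..t1}))"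
    and dbdd1: "\<exists>M. \<forall>t\<in>{t0<..t1}. \<forall>x\<in>\<Omega>. \<bar>v1 t x\<bar> \<le> M"
    and dbdd2: "\<exists>M. \<forall>t\<in>{t0<..t1}. \<forall>x\<in>\<Omega>. \<bar>v2 t x\<bar> \<le> M"
    and ineq: "\<forall>t\<in>{t0<..t1}. \<forall>x\<in>\<Omega>.
                 v1 t x - Lop J \<delta> \<Omega> (u1 t) x - f (u1 t x) \<ge> v2 t x - Lop J \<delta> \<Omega> (u2 t) x - f (u2 t x)"
    and init: "\<forall>x\<in>\<Omega>. u1 t0 x \<ge> u2 t0 x"
  shows "\<forall>t\<in>{t0..t1}. \<forall>x\<in>\<Omega>. u1 t x \<ge> u2 t x"
proof -
  have op: "open \<Omega>" unfolding \<Omega>_def using K by (simp add: compact_imp_closed open_Diff)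
  obtain Cj where Cj0: "Cj \<ge> 0" and Cj: "\<forall>x\<in>\<Omega>. integrable (restrict_space lebesgue \<Omega>) (\<lambda>w. J (\<delta> x w))
      \<and> integral\<^sup>L (restrict_space lebesgue \<Omega>) (\<lambda>w. J (\<delta> x w)) \<le> Cj"
    using J_bound[OF qe AJ op] by blast
  have Jnn: "\<And>r. r \<ge> 0 \<Longrightarrow> 0 \<le> J r" using AJ unfolding assm_AJ_def by auto
  have dnn: "\<And>x y. x \<in> \<Omega> \<Longrightarrow> y \<in> \<Omega> \<Longrightarrow> 0 \<le> \<delta> x y"
    using qe closure_subset unfolding quasi_euclidean_def is_distance_on_def by blast
  have gnn: "\<And>x y. x \<in> \<Omega> \<Longrightarrow> y \<in> \<Omega> \<Longrightarrow> 0 \<le> J (\<delta> x y)" using Jnn dnn by blast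
  obtain B1 where B1: "\<forall>t\<in>{t0..t1}. \<forall>x\<in>\<Omega>. \<bar>u1 t x\<bar> \<le> B1" using bdd1 by blast
  obtain B2 where B2: "\<forall>t\<in>{t0..t1}. \<forall>x\<in>\<Omega>. \<bar>u2 t x\<bar> \<le> B2" using bdd2 by blast
  define B where "B = max (max B1 B2) 0"
  have Bu1: "\<And>t x. t \<in> {t0..t1} \<Longrightarrow> x \<in> \<Omega> \<Longrightarrow> \<bar>u1 t x\<bar> \<le> B" using B1 unfolding B_def by force
  have Bu2: "\<And>t x. t \<in> {t0..t1} \<Longrightarrow> x \<in> \<Omega> \<Longrightarrow> \<bar>u2 t x\<bar> \<le> B" using B2 unfolding B_def by force
  obtain Lf where Lf: "Lf-lipschitz_on {-B..B} f" using f_lip compact_Icc by blast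
  have Lf0: "0 \<le> Lf" using lipschitz_on_nonneg[OF Lf] .
  define \<phi> where "\<phi> t x = u2 t x - u1 t x" for t x
  define A where "A = Cj + Lf"
  have A0: "0 \<le> A" using Cj0 Lf0 unfolding A_def by simp
  define h where "h = 1 / (2 * A + 2)"
  have h0: "0 < h" using A0 unfolding h_def by simp
  have Ah: "A * h \<le> 1/2" using A0 unfolding h_def by (simp add: field_simps)
  have step: "\<forall>t\<in>{a..T}. \<forall>x\<in>\<Omega>. \<phi> t x \<le> 0"
    if a0: "t0 \<le> a" and aT: "a \<le> T" and T1: "T \<le> t1" and Th: "T - a \<le> h" and pa: "\<forall>x\<in>\<Omega>. \<phi> a x \<le> 0" for a T
  proof -
    define S where "S = insert 0 {max 0 (\<phi> t x) | t x. t \<in> {a..T} \<and> x \<in> \<Omega>}"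
    define Ms where "Ms = Sup S"
    have bddS: "bdd_above S"
    proof (rule bdd_aboveI[of _ "2 * B"])
      fix s assume "s \<in> S"
      then show "s \<le> 2 * B"
      proof (cases "s = 0")
        case True
        have "0 \<le> B" unfolding B_def by simp
        then show ?thesis using True by simp
      next
        case False
        then obtain t x where "t \<in> {a..T}" "x \<in> \<Omega>" "s = max 0 (\<phi> t x)" using \<open>s \<in> S\<close> unfolding S_def by auto
        moreover have "t \<in> {t0..t1}" using calculation a0 T1 by auto
        ultimately show ?thesis using Bu1[of t x] Bu2[of t x] False unfolding \<phi>_def by auto
      qed
    qed
    have Ms0: "0 \<le> Ms" unfolding Ms_def using bddS by (intro cSup_upper) (auto simp: S_def)
    have phiMs: "\<phi> t x \<le> Ms" if "t \<in> {a..T}" "x \<in> \<Omega>" for t x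
    proof -
      have "max 0 (\<phi> t x) \<in> S" using that unfolding S_def by blast
      then have "max 0 (\<phi> t x) \<le> Ms" unfolding Ms_def using bddS by (intro cSup_upper)
      then show ?thesis by simp
    qed
    have claim: "\<phi> t x \<le> A * (T - a) * Ms" if t: "t \<in> {a..T}" and x: "x \<in> \<Omega>" for t x
    proof (cases "\<phi> t x \<le> 0")
      case True
      then show ?thesis using A0 Ms0 t by (smt (verit, best) atLeastAtMost_iff mult_nonneg_nonneg)
    next
      case False
      have ctx: "continuous_on {t0..t1} (\<lambda>\<tau>. \<phi> \<tau> x)"
        using ct1 ct2 x unfolding \<phi>_def by (intro continuous_intros) auto
      have cat: "continuous_on {a..t} (\<lambda>\<tau>. \<phi> \<tau> x)"
        using a0 t T1 by (intro continuous_on_subset[OF ctx]) auto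
      define Z where "Z = {a..t} \<inter> (\<lambda>\<tau>. \<phi> \<tau> x) -` {..0}"
      have Zc: "closed Z" unfolding Z_def by (rule continuous_closed_preimage[OF cat]) auto
      have aZ: "a \<in> Z" unfolding Z_def using pa x t by auto
      have Zb: "bdd_above Z" unfolding Z_def by (rule bdd_aboveI[of _ t]) auto
      define s where "s = Sup Z"
      have sZ: "s \<in> Z" unfolding s_def using closed_contains_Sup[OF _ Zb Zc] aZ by blast
      have ps: "\<phi> s x \<le> 0" and sa: "a \<le> s" and st0: "s \<le> t" using sZ unfolding Z_def by auto
      have st: "s < t" using st0 ps False by (cases "s = t") auto
      have pos: "\<phi> \<xi> x > 0" if "s < \<xi>" "\<xi> \<le> t" for \<xi>
      proof (rule ccontr)
        assume "\<not> \<phi> \<xi> x > 0"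
        then have "\<xi> \<in> Z" unfolding Z_def using that sa by auto
        then have "\<xi> \<le> s" unfolding s_def using Zb by (rule cSup_upper)
        then show False using that by simp
      qed
      have der: "DERIV (\<lambda>\<tau>. \<phi> \<tau> x) \<xi> :> (v2 \<xi> x - v1 \<xi> x)" if "s < \<xi>" "\<xi> < t" for \<xi>
      proof -
        have int: "\<xi> \<in> interior {t0<..t1}" using that sa a0 t T1 by auto
        have "((\<lambda>s. u1 s x) has_real_derivative v1 \<xi> x) (at \<xi> within {t0<..t1})"
          "((\<lambda>s. u2 s x) has_real_derivative v2 \<xi> x) (at \<xi> within {t0<..t1})"
          using ct1 ct2 x that sa a0 t T1 by auto
        then have "((\<lambda>s. u1 s x) has_real_derivative v1 \<xi> x) (at \<xi>)"
          "((\<lambda>s. u2 s x) has_real_derivative v2 \<xi> x) (at \<xi>)"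
          using at_within_interior[OF int] by auto
        then show ?thesis unfolding \<phi>_def by (intro DERIV_diff)
      qed
      have cst: "continuous_on {s..t} (\<lambda>\<tau>. \<phi> \<tau> x)"
        using sa a0 t T1 by (intro continuous_on_subset[OF ctx]) auto
      obtain l \<xi> where \<xi>: "s < \<xi>" "\<xi> < t" and dl: "DERIV (\<lambda>\<tau>. \<phi> \<tau> x) \<xi> :> l"
        and eq: "\<phi> t x - \<phi> s x = (t - s) * l"
        using MVT[OF st cst] der real_differentiable_def by blast
      have l: "l = v2 \<xi> x - v1 \<xi> x" using DERIV_unique[OF dl der[OF \<xi>]] .
      have \<xi>T: "\<xi> \<in> {a..T}" "\<xi> \<in> {t0<..t1}" "\<xi> \<in> {t0..t1}" using \<xi> sa a0 t T1 by auto
      have p\<xi>: "0 < \<phi> \<xi> x" using pos \<xi> by simp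
      have "Lop J \<delta> \<Omega> (u2 \<xi>) x - Lop J \<delta> \<Omega> (u1 \<xi>) x \<le> Ms * Cj"
      proof (rule Lop_diff[OF op x])
        show "integrable (restrict_space lebesgue \<Omega>) (\<lambda>y. J (\<delta> x y))" using Cj x by blast
        show "\<forall>y\<in>\<Omega>. 0 \<le> J (\<delta> x y)" using gnn x by blast
        show "integral\<^sup>L (restrict_space lebesgue \<Omega>) (\<lambda>y. J (\<delta> x y)) \<le> Cj" using Cj x by blast
        show "continuous_on \<Omega> (u1 \<xi>)" "continuous_on \<Omega> (u2 \<xi>)" using cx1 cx2 \<xi>T by auto
        show "\<forall>y\<in>\<Omega>. \<bar>u1 \<xi> y\<bar> \<le> B" "\<forall>y\<in>\<Omega>. \<bar>u2 \<xi> y\<bar> \<le> B" using Bu1 Bu2 \<xi>T by auto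
        show "\<forall>y\<in>\<Omega>. u2 \<xi> y - u1 \<xi> y \<le> Ms" using phiMs \<xi>T unfolding \<phi>_def by auto
        show "0 \<le> Ms" by (rule Ms0)
        show "0 \<le> u2 \<xi> x - u1 \<xi> x" using p\<xi> unfolding \<phi>_def by simp
      qed
      moreover have "f (u2 \<xi> x) - f (u1 \<xi> x) \<le> Lf * Ms"
      proof -
        have "dist (f (u2 \<xi> x)) (f (u1 \<xi> x)) \<le> Lf * dist (u2 \<xi> x) (u1 \<xi> x)"
          using Bu1[OF \<xi>T(3) x] Bu2[OF \<xi>T(3) x] by (intro lipschitz_onD[OF Lf]) auto
        moreover have "dist (u2 \<xi> x) (u1 \<xi> x) \<le> Ms"
          using phiMs[OF \<xi>T(1) x] p\<xi> unfolding \<phi>_def dist_real_def by simp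
        ultimately have "dist (f (u2 \<xi> x)) (f (u1 \<xi> x)) \<le> Lf * Ms"
          using Lf0 by (smt (verit) mult_left_mono)
        then show ?thesis unfolding dist_real_def by simp
      qed
      moreover have "v2 \<xi> x - v1 \<xi> x \<le> Lop J \<delta> \<Omega> (u2 \<xi>) x - Lop J \<delta> \<Omega> (u1 \<xi>) x + (f (u2 \<xi> x) - f (u1 \<xi> x))"
        using ineq \<xi>T(2) x by fastforce
      ultimately have "l \<le> A * Ms" unfolding l A_def by (simp add: algebra_simps)
      then have "\<phi> t x \<le> (t - s) * (A * Ms)" using eq ps st by (smt (verit) mult_left_mono)
      also have "\<dots> \<le> (T - a) * (A * Ms)" using st sa t A0 Ms0 by (intro mult_right_mono) auto
      finally show ?thesis by (simp add: algebra_simps)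
    qed
    have "Ms \<le> A * (T - a) * Ms"
      unfolding Ms_def[symmetric]
    proof -
      have "S \<noteq> {}" unfolding S_def by simp
      moreover have "\<And>s. s \<in> S \<Longrightarrow> s \<le> A * (T - a) * Ms"
      proof -
        fix s assume "s \<in> S"
        then show "s \<le> A * (T - a) * Ms"
        proof (cases "s = 0")
          case True then show ?thesis using A0 Ms0 aT by simp
        next
          case False
          then obtain t x where "t \<in> {a..T}" "x \<in> \<Omega>" "s = max 0 (\<phi> t x)" using \<open>s \<in> S\<close> unfolding S_def by auto
          then show ?thesis using claim[of t x] A0 Ms0 aT by simp
        qed
      qed
      ultimately show ?thesis unfolding Ms_def by (rule cSup_least)
    qed
    moreover have "A * (T - a) \<le> 1/2"
      using Ah Th A0 by (smt (verit) mult_left_mono)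
    ultimately have "Ms \<le> 0" using Ms0 mult_right_mono[of "A * (T - a)" "1/2" Ms] by linarith
    then show ?thesis using phiMs by fastforce
  qed
  have ind: "\<forall>t\<in>{t0..min (t0 + real n * h) t1}. \<forall>x\<in>\<Omega>. \<phi> t x \<le> 0" for n
  proof (induction n)
    case 0
    then show ?case using init t01 unfolding \<phi>_def by auto
  next
    case (Suc n)
    show ?case
    proof (intro ballI)
      fix t x assume t: "t \<in> {t0..min (t0 + real (Suc n) * h) t1}" and x: "x \<in> \<Omega>"
      show "\<phi> t x \<le> 0"
      proof (cases "t \<le> t0 + real n * h")
        case True
        then show ?thesis using Suc.IH t x by auto
      next
        case False
        define a where "a = t0 + real n * h"
        have a0: "t0 \<le> a" unfolding a_def using h0 by simp
        have at: "a \<le> t" using False unfolding a_def by simp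
        have t1: "t \<le> t1" using t by simp
        have th: "t - a \<le> h" using t unfolding a_def by (simp add: algebra_simps)
        have pa: "\<forall>x\<in>\<Omega>. \<phi> a x \<le> 0" using Suc.IH a0 at t1 unfolding a_def by auto
        show ?thesis using step[OF a0 at t1 th pa] x at by auto
      qed
    qed
  qed
  show ?thesis
  proof (intro ballI)
    fix t x assume t: "t \<in> {t0..t1}" and x: "x \<in> \<Omega>"
    obtain n :: nat where n: "(t1 - t0) / h < real n" using reals_Archimedean2 by blast
    then have "t1 - t0 \<le> real n * h" using h0 by (simp add: field_simps)
    then have "t \<in> {t0..min (t0 + real n * h) t1}" using t by auto
    then have "\<phi> t x \<le> 0" using ind x by blast
    then show "u2 t x \<le> u1 t x" unfolding \<phi>_def by simp
  qed
qed
end
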